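(* Let $\alpha\ge 0$ and $p>1$, set $\beta=\frac{\alpha+2}{p+1}$, and let $n$ be a positive integer with $\beta(\beta+n-2)>0$. Let $w$ be the solution of \[ w''+\frac{n-1}{t}w'=\frac{t^{\alpha}}{w^p},\qquad w(0)=1,\quad w'(0)=0, \] and let $w_0(t)=c_0t^{\beta}$ with $c_0=\bigl[\beta(\beta+n-2)\bigr]^{-1/(p+1)}$. If $w$ and $w_0$ intersect infinitely many times on $(0,\infty)$, then the solution curve of the MEMS problem makes infinitely many turns, i.e. $\lambda(t)=t^{\alpha+2}/w(t)^{p+1}$ has $\lambda'(t)$ changing sign infinitely many times on $(0,\infty)$.
   Context: The MEMS problem is \[ u''+\frac{n-1}{r}u'+\lambda\frac{r^{\alpha}}{(1-u)^p}=0\quad(0<r<1),\qquad u'(0)=u(1)=0,\qquad 0<u<1. \] The solution $w$ is positive and increasing and is defined for all $t>0$. The function $w_0$ solves the same differential equation as $w$. The solution curve is $t\mapsto(\lambda,u(0))=(t^{\alpha+2}/w(t)^{p+1},\,1-1/w(t))$, $t\in(0,\infty)$, with $u(r)=1-w(tr)/w(t)$ the solution at $\lambda(t)$. A turn is a sign change of $\lambda'(t)$. *)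

theory Defs
  imports "HOL-Analysis.Analysis"
begin

definition infinitely_many_sign_changes :: "(real \<Rightarrow> real) \<Rightarrow> real set \<Rightarrow> bool" where
  "infinitely_many_sign_changes f S \<longleftrightarrow>
     (\<forall>N::nat. \<exists>s::nat \<Rightarrow> real. strict_mono_on {..N} s \<and> (\<forall>i\<le>N. s i \<in> S) \<and>
        (\<forall>i<N. f (s i) * f (s (Suc i)) < 0))"

definition w_solution :: "real \<Rightarrow> real \<Rightarrow> nat \<Rightarrow> (real \<Rightarrow> real) \<Rightarrow> bool" where
  "w_solution \<alpha> p n w \<longleftrightarrow>
     (\<exists>w1 w2. w 0 = 1 \<and> (\<forall>t\<ge>0. w t > 0) \<and>
        (w has_real_derivative 0) (at 0 within {0..}) \<and> w1 0 = 0 \<and>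
        continuous_on {0..} w1 \<and>
        (\<forall>t>0. (w has_real_derivative w1 t) (at t) \<and>
               (w1 has_real_derivative w2 t) (at t) \<and>
               w2 t + (real n - 1) / t * w1 t = t powr \<alpha> / (w t) powr p))"

end

theory Submission
  imports Defs
begin

locale mems =
 fixes \<alpha> p \<beta> b c0 k :: real and n :: nat and w w1 w2 :: "real \<Rightarrow> real"
 assumes alpha: "\<alpha> \<ge> 0" and p: "p > 1"
 and beta: "\<beta> = (\<alpha>+2)/(p+1)" and bdef: "b = \<beta>*(\<beta> + real n - 2)" and bpos: "b > 0"
 and c0: "c0 = b powr (-1/(p+1))" and kdef: "k = 2*\<beta> + real n - 2"
 and w0: "w 0 = 1" and wpos: "\<And>t. t \<ge> 0 \<Longrightarrow> w t > 0"
 and wd0: "(w has_real_derivative 0) (at 0 within {0..})"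
 and wd: "\<And>t. t>0 \<Longrightarrow> (w has_real_derivative w1 t) (at t)"
 and w1d: "\<And>t. t>0 \<Longrightarrow> (w1 has_real_derivative w2 t) (at t)"
 and ode: "\<And>t. t>0 \<Longrightarrow> w2 t + (real n - 1)/t * w1 t = t powr \<alpha> / (w t) powr p"
begin

lemma betapos: "\<beta> > 0" using beta alpha p by auto
lemma kpos: "k > 0" using betapos bpos bdef kdef
proof -
  have "\<beta> + real n - 2 > 0" using betapos bpos bdef zero_less_mult_pos by blast
  then show ?thesis using kdef betapos by simp
qed
lemma c0pos: "c0 > 0" using c0 bpos by auto
lemma c0pow: "c0 powr (p+1) = 1/b"
proof -
  have "c0 powr (p+1) = b powr (-1/(p+1)*(p+1))" unfolding c0 by (simp add: powr_powr)
  also have "\<dots> = b powr (-1)" using p by simp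
  finally show ?thesis using bpos by (simp add: powr_minus inverse_eq_divide)
qed
lemma bb: "\<beta>*(p+1) = \<alpha>+2" using beta p by simp

definition G :: "real \<Rightarrow> real" where "G x = b*x^2/2 + x powr (1-p)/(p-1)"

lemma G_deriv: "x > 0 \<Longrightarrow> (G has_real_derivative (b*x - x powr (-p))) (at x)"
  unfolding G_def using p
  apply (auto intro!: derivative_eq_intros)
  apply (simp add: field_simps)
  done

lemma Gd_sign: assumes "y > 0"
  shows "(y > c0 \<longrightarrow> b*y - y powr (-p) > 0) \<and> (y < c0 \<longrightarrow> b*y - y powr (-p) < 0)"
proof -
  have e: "b*y - y powr (-p) = y powr (-p) * (b * y powr (p+1) - 1)"
    using assms by (simp add: algebra_simps powr_add[symmetric] powr_minus) (simp add: powr_add)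
  have yp: "y powr (-p) > 0" using assms by simp
  have "y > c0 \<Longrightarrow> y powr (p+1) > c0 powr (p+1)"
    using c0pos p by (intro powr_less_mono2) auto
  moreover have "y < c0 \<Longrightarrow> y powr (p+1) < c0 powr (p+1)"
    using assms p by (intro powr_less_mono2) auto
  ultimately show ?thesis unfolding e c0pow using bpos yp
    by (auto simp: field_simps mult_pos_pos mult_pos_neg)
qed

lemma G_min: assumes "x > 0" shows "G x \<ge> G c0"
proof (cases "x > c0")
  case True
  then obtain z where z: "c0 < z" "z < x" "G x - G c0 = (x - c0) * (b*z - z powr (-p))"
    using MVT2[of c0 x G "\<lambda>y. b*y - y powr (-p)"] G_deriv c0pos by force
  have "b*z - z powr (-p) > 0" using Gd_sign[of z] z c0pos by auto
  then show ?thesis using z True by (smt (verit) mult_pos_pos)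
next
  case False
  show ?thesis
  proof (cases "x = c0")
    case False
    then have xl: "x < c0" using \<open>\<not> x > c0\<close> by simp
    then obtain z where z: "x < z" "z < c0" "G c0 - G x = (c0 - x) * (b*z - z powr (-p))"
      using MVT2[of x c0 G "\<lambda>y. b*y - y powr (-p)"] G_deriv assms by force
    have "b*z - z powr (-p) < 0" using Gd_sign[of z] z assms by auto
    then show ?thesis using z xl by (smt (verit) mult_pos_neg)
  qed simp
qed

definition u :: "real \<Rightarrow> real" where "u t = t powr (-\<beta>) * w t"
definition r :: "real \<Rightarrow> real" where "r t = t * w1 t - \<beta> * w t"
definition q :: "real \<Rightarrow> real" where "q t = t powr (-\<beta>) * r t"
definition Phi :: "real \<Rightarrow> real" where "Phi t = (q t)^2/2 + (G (u t) - G c0)"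
definition Psi :: "real \<Rightarrow> real" where "Psi t = t powr (2*k) * Phi t"

lemma u_pos: "t > 0 \<Longrightarrow> u t > 0" unfolding u_def using wpos by simp

lemma u_deriv: assumes "t > 0" shows "(u has_real_derivative q t / t) (at t)"
proof -
  have "(u has_real_derivative (-\<beta> * t powr (-\<beta> - 1) * w t + t powr (-\<beta>) * w1 t)) (at t)"
    unfolding u_def using assms wd[OF assms]
    by (auto intro!: derivative_eq_intros)
  moreover have "-\<beta> * t powr (-\<beta> - 1) * w t + t powr (-\<beta>) * w1 t = q t / t"
    unfolding q_def r_def using assms by (simp add: powr_diff field_simps)
  ultimately show ?thesis by simp
qed

lemma q_deriv: assumes "t > 0"
  shows "(q has_real_derivative t powr (-\<beta>) * (t powr (\<alpha>+1) * w t powr (-p) - k * w1 t + \<beta>^2 * w t / t)) (at t)"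
proof -
  have "(q has_real_derivative (-\<beta> * t powr (-\<beta> - 1) * r t + t powr (-\<beta>) * (w1 t + t * w2 t - \<beta> * w1 t))) (at t)"
    unfolding q_def r_def using assms wd[OF assms] w1d[OF assms]
    by (auto intro!: derivative_eq_intros)
  moreover have "-\<beta> * t powr (-\<beta> - 1) * r t + t powr (-\<beta>) * (w1 t + t * w2 t - \<beta> * w1 t)
     = t powr (-\<beta>) * (t powr (\<alpha>+1) * w t powr (-p) - k * w1 t + \<beta>^2 * w t / t)"
  proof -
    have 1: "t * w2 t = t powr (\<alpha>+1) * w t powr (-p) - (real n - 1) * w1 t"
      using ode[OF assms] assms by (simp add: field_simps powr_add powr_minus)
    have 2: "t powr (-\<beta> - 1) = t powr (-\<beta>) / t" using assms by (simp add: powr_diff)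
    show ?thesis unfolding 1 2 r_def kdef using assms by (simp add: field_simps power2_eq_square)
  qed
  ultimately show ?thesis by simp
qed

lemma Phi_deriv: assumes "t > 0" shows "(Phi has_real_derivative (-(k/t) * (q t)^2)) (at t)"
proof -
  define A where "A = t powr (-\<beta>)"
  define q' where "q' = A * (t powr (\<alpha>+1) * w t powr (-p) - k * w1 t + \<beta>^2 * w t / t)"
  have wp: "w t > 0" using wpos assms by simp
  have "(Phi has_real_derivative (2 * q t * q' / 2 + (b * u t - u t powr (-p)) * (q t / t))) (at t)"
    unfolding Phi_def q'_def A_def
    using q_deriv[OF assms] u_deriv[OF assms] G_deriv[OF u_pos[OF assms]]
    by (auto intro!: derivative_eq_intros DERIV_chain2[where f=G])
  moreover have "q' + (b * u t - u t powr (-p)) / t = -(k/t) * q t"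
  proof -
    have 1: "u t powr (-p) = t powr (\<beta>*p) * w t powr (-p)"
      unfolding u_def using assms wp by (simp add: powr_mult powr_powr)
    have 2: "A * t powr (\<alpha>+1) = t powr (\<beta>*p) / t"
    proof -
      have "A * t powr (\<alpha>+1) = t powr (\<beta>*p - 1)" unfolding A_def
        using assms bb by (simp add: powr_add[symmetric] algebra_simps) (rule arg_cong[where f="\<lambda>x. t powr x"], linarith)
      then show ?thesis using assms by (simp add: powr_diff)
    qed
    have 3: "b + \<beta>^2 = \<beta> * k" unfolding bdef kdef by (simp add: power2_eq_square algebra_simps)
    have "q' + (b * u t - u t powr (-p)) / t = A * (b + \<beta>^2) * w t / t - k * A * w1 t"
    proof -
      have 4: "u t powr (-p) = A * t powr (\<alpha>+1) * t * w t powr (-p)" unfolding 1 2 using assms by simp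
      show ?thesis unfolding q'_def 4 unfolding u_def A_def[symmetric] using assms
        by (simp add: field_simps)
    qed
    also have "\<dots> = -(k/t) * q t" unfolding 3 q_def r_def A_def[symmetric] using assms
      by (simp add: field_simps)
    finally show ?thesis .
  qed
  then have "2 * q t * q' / 2 + (b * u t - u t powr (-p)) * (q t / t) = -(k/t) * (q t)^2"
  proof -
    have "2 * q t * q' / 2 + (b * u t - u t powr (-p)) * (q t / t) = q t * (q' + (b * u t - u t powr (-p)) / t)"
      using assms by (simp add: field_simps)
    then show ?thesis unfolding \<open>q' + _ = _\<close> by (simp add: power2_eq_square)
  qed
  ultimately show ?thesis by simp
qed

lemma Phi_ge: "t > 0 \<Longrightarrow> Phi t \<ge> (q t)^2/2"
  unfolding Phi_def using G_min[OF u_pos] by simp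

lemma Psi_deriv: assumes "t > 0"
  shows "(Psi has_real_derivative (k * t powr (2*k) / t * (2 * (G (u t) - G c0)))) (at t)"
proof -
  have "(Psi has_real_derivative (2*k * t powr (2*k - 1) * Phi t + t powr (2*k) * (-(k/t) * (q t)^2))) (at t)"
    unfolding Psi_def using assms Phi_deriv[OF assms]
    by (auto intro!: derivative_eq_intros)
  moreover have "2*k * t powr (2*k - 1) * Phi t + t powr (2*k) * (-(k/t) * (q t)^2)
     = k * t powr (2*k) / t * (2 * (G (u t) - G c0))"
  proof -
    have e: "t powr (2*k - 1) = t powr (2*k) / t" using assms by (simp add: powr_diff)
    show ?thesis unfolding e Phi_def using assms by (simp add: field_simps)
  qed
  ultimately show ?thesis by simp
qed

lemma Psi_mono: assumes "0 < a" "a \<le> c" shows "Psi a \<le> Psi c"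
proof (rule DERIV_nonneg_imp_nondecreasing[OF assms(2)])
  fix x assume x: "a \<le> x" "x \<le> c"
  then have xp: "x > 0" using assms by simp
  have "k * x powr (2*k) / x * (2 * (G (u x) - G c0)) \<ge> 0"
    using kpos xp G_min[OF u_pos[OF xp]] by simp
  then show "\<exists>y. DERIV Psi x :> y \<and> 0 \<le> y" using Psi_deriv[OF xp] by blast
qed

lemma core: assumes "s > 0" "u s = c0" "q s = 0" shows False
proof -
  have P0: "Psi s = 0" unfolding Psi_def Phi_def using assms by simp
  have qz: "q t = 0" if "0 < t" "t \<le> s" for t
  proof -
    have "Psi t \<le> 0" using Psi_mono[OF that] P0 by simp
    then have "Phi t \<le> 0" unfolding Psi_def using that
      by (simp add: mult_le_0_iff)
    then have "(q t)^2 \<le> 0" using Phi_ge[OF that(1)] zero_le_power2[of "q t"] by linarith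
    then show ?thesis by simp
  qed
  have uc: "u t = c0" if "0 < t" "t < s" for t
  proof -
    have "\<And>x. t \<le> x \<Longrightarrow> x \<le> s \<Longrightarrow> DERIV u x :> q x / x" using u_deriv that by auto
    from MVT2[OF \<open>t < s\<close> this] obtain z where z: "t < z" "z < s" "u s - u t = (s - t) * (q z / z)"
      by blast
    then show ?thesis using qz[of z] that assms by simp
  qed
  have ev: "eventually (\<lambda>t. w t = c0 * t powr \<beta>) (at_right 0)"
  proof -
    have "eventually (\<lambda>t. 0 < t \<and> t < s) (at_right 0)"
      using assms(1) unfolding eventually_at_right_field by blast
    then show ?thesis
    proof (rule eventually_mono)
      fix t assume t: "0 < t \<and> t < s"
      then have "t powr (-\<beta>) * w t = c0" using uc unfolding u_def by auto
      then show "w t = c0 * t powr \<beta>" using t by (auto simp: powr_minus field_simps)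
    qed
  qed
  have "(w \<longlongrightarrow> w 0) (at 0 within {0..})"
    using DERIV_continuous[OF wd0] by (simp add: continuous_within)
  then have L1: "(w \<longlongrightarrow> 1) (at_right 0)" using w0
    by (auto intro: tendsto_within_subset)
  have "((\<lambda>t. t powr \<beta>) \<longlongrightarrow> 0) (at_right (0::real))"
    by (rule tendsto_zero_powrI) (auto simp: betapos eventually_at_right_field intro: tendsto_ident_at exI[of _ 1])
  then have "((\<lambda>t. c0 * t powr \<beta>) \<longlongrightarrow> c0 * 0 powr \<beta>) (at_right 0)"
    by (auto intro: tendsto_mult_right_zero)
  then have L2: "(w \<longlongrightarrow> 0) (at_right 0)"
    using tendsto_cong[OF ev] by simp
  show False using tendsto_unique[OF _ L1 L2] by simp
qed

lemma lam_deriv: assumes "t > 0"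
  shows "deriv (\<lambda>t. t powr (\<alpha> + 2) / (w t) powr (p + 1)) t
     = -(p+1) * t powr (\<alpha>+1) / (w t) powr (p+2) * r t"
proof -
  have wp: "w t > 0" using wpos assms by simp
  have "((\<lambda>t. t powr (\<alpha> + 2) / (w t) powr (p + 1)) has_real_derivative
      (((\<alpha>+2) * t powr (\<alpha>+1)) * (w t) powr (p+1) - t powr (\<alpha>+2) * ((p+1) * (w t) powr p * w1 t))
        / ((w t) powr (p+1))^2) (at t)"
  proof -
    have N: "((\<lambda>t. t powr (\<alpha> + 2)) has_real_derivative (\<alpha>+2) * t powr (\<alpha>+1)) (at t)"
      using has_real_derivative_powr[OF assms, of "\<alpha>+2"] by (simp add: add_ac)
    have D: "((\<lambda>t. (w t) powr (p + 1)) has_real_derivative (p+1) * (w t) powr p * w1 t) (at t)"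
      using DERIV_fun_powr[OF wd[OF assms] wp, of "p+1"] by simp
    show ?thesis using DERIV_divide[OF N D] wp by (simp add: power2_eq_square)
  qed
  moreover have "(((\<alpha>+2) * t powr (\<alpha>+1)) * (w t) powr (p+1) - t powr (\<alpha>+2) * ((p+1) * (w t) powr p * w1 t))
        / ((w t) powr (p+1))^2 = -(p+1) * t powr (\<alpha>+1) / (w t) powr (p+2) * r t"
  proof -
    have e: "\<alpha>+2 = 1 + (\<alpha>+1)" by simp
    have "t powr (\<alpha>+2) = t powr 1 * t powr (\<alpha>+1)" by (simp only: e powr_add)
    then have 1: "t powr (\<alpha>+2) = t * t powr (\<alpha>+1)" using assms by simp
    have 2: "(w t) powr (p+1) = w t * w t powr p" using wp by (simp add: powr_add)
    have 3: "(w t) powr (p+2) = w t * w t * w t powr p" using wp by (simp add: powr_add power2_eq_square)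
    have 4: "\<alpha>+2 = \<beta>*(p+1)" using bb by simp
    show ?thesis unfolding 1 2 3 r_def unfolding 4 using wp assms p
      by (simp add: field_simps power2_eq_square)
  qed
  ultimately show ?thesis by (simp add: DERIV_imp_deriv)
qed

lemma f_sign: assumes tp: "t > 0"
  defines "f \<equiv> deriv (\<lambda>t. t powr (\<alpha> + 2) / (w t) powr (p + 1))"
  shows "(q t < 0 \<longrightarrow> f t > 0) \<and> (q t > 0 \<longrightarrow> f t < 0)"
proof -
  have wp: "w t > 0" using wpos assms by simp
  have C: "(p+1) * t powr (\<alpha>+1) / (w t) powr (p+2) > 0" using p assms wp by simp
  have r: "r t = t powr \<beta> * q t" unfolding q_def using assms by (simp add: powr_minus)
  have f: "f t = -((p+1) * t powr (\<alpha>+1) / (w t) powr (p+2)) * (t powr \<beta> * q t)"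
    unfolding f_def lam_deriv[OF tp] r by (simp only: minus_divide_left minus_mult_left)
  have tb: "t powr \<beta> > 0" using assms by simp
  have gen: "\<And>C T x::real. C>0 \<Longrightarrow> T>0 \<Longrightarrow> (x<0 \<longrightarrow> -C*(T*x) > 0) \<and> (x>0 \<longrightarrow> -C*(T*x) < 0)"
    by (simp add: mult_pos_neg mult_pos_pos)
  show ?thesis unfolding f using gen[OF C tb] .
qed

lemma between: assumes "0 < z1" "z1 < z2" "u z1 = c0" "u z2 = c0"
  defines "f \<equiv> deriv (\<lambda>t. t powr (\<alpha> + 2) / (w t) powr (p + 1))"
  shows "\<exists>P M. z1 < P \<and> P < z2 \<and> z1 < M \<and> M < z2 \<and> f P > 0 \<and> f M < 0"
proof -
  have der: "\<And>x. z1 \<le> x \<Longrightarrow> DERIV u x :> q x / x"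
    using u_deriv assms(1) by auto
  obtain m where m: "z1 < m" "m < z2" "u z2 - u z1 = (z2 - z1) * (q m / m)"
    using MVT2[OF assms(2) der] by blast
  have qm: "q m = 0" using m assms by simp
  have um: "u m \<noteq> c0" using core[of m] qm m assms by auto
  obtain a where a: "z1 < a" "a < m" "u m - u z1 = (m - z1) * (q a / a)"
    using MVT2[OF m(1) der] by blast
  have mp: "0 < m" using m assms by simp
  obtain b where b: "m < b" "b < z2" "u z2 - u m = (z2 - m) * (q b / b)"
    using MVT2[OF m(2) der] m(1) by force
  have ap: "a > 0" and bp: "b > 0" using a b assms by auto
  have pos: "\<And>x y d::real. x>0 \<Longrightarrow> d>0 \<Longrightarrow> x*(y/d) > 0 \<Longrightarrow> y>0"
    by (simp add: zero_less_mult_iff zero_less_divide_iff)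
  have neg: "\<And>x y d::real. x>0 \<Longrightarrow> d>0 \<Longrightarrow> x*(y/d) < 0 \<Longrightarrow> y<0"
    by (simp add: mult_less_0_iff divide_less_0_iff)
  show ?thesis
  proof (cases "u m > c0")
    case True
    then have "(m - z1) * (q a / a) > 0" "(z2 - m) * (q b / b) < 0" using a b assms by auto
    then have "q a > 0" "q b < 0"
      using pos[where x="m - z1" and y="q a" and d=a] neg[where x="z2 - m" and y="q b" and d=b] a b ap bp by auto
    then show ?thesis
      using f_sign[OF ap] f_sign[OF bp] a b m unfolding f_def by (intro exI[of _ a] exI[of _ b]) auto
  next
    case False
    then have "u m < c0" using um by simp
    then have "(m - z1) * (q a / a) < 0" "(z2 - m) * (q b / b) > 0" using a b assms by auto
    then have "q a < 0" "q b > 0"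
      using neg[where x="m - z1" and y="q a" and d=a] pos[where x="z2 - m" and y="q b" and d=b] a b ap bp by auto
    then show ?thesis
      using f_sign[OF ap] f_sign[OF bp] a b m unfolding f_def by (intro exI[of _ a] exI[of _ b]) auto
  qed
qed

end

theorem lemma4p1:
  fixes \<alpha> p :: real and n :: nat and w :: "real \<Rightarrow> real"
  assumes "\<alpha> \<ge> 0" and "p > 1" and "n \<ge> 1"
    and "((\<alpha> + 2) / (p + 1)) * ((\<alpha> + 2) / (p + 1) + real n - 2) > 0"
    and "w_solution \<alpha> p n w"
    and "infinite {t. t > 0 \<and> w t =
            (((\<alpha> + 2) / (p + 1)) * ((\<alpha> + 2) / (p + 1) + real n - 2)) powr (-1 / (p + 1))
              * t powr ((\<alpha> + 2) / (p + 1))}"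
  shows "infinitely_many_sign_changes
           (deriv (\<lambda>t. t powr (\<alpha> + 2) / (w t) powr (p + 1))) {0<..}"
proof -
  define \<beta> where "\<beta> = (\<alpha> + 2) / (p + 1)"
  define b where "b = \<beta> * (\<beta> + real n - 2)"
  define c0 where "c0 = b powr (-1/(p+1))"
  define k where "k = 2*\<beta> + real n - 2"
  define f where "f = deriv (\<lambda>t. t powr (\<alpha> + 2) / (w t) powr (p + 1))"
  obtain w1 w2 where W: "w 0 = 1" "\<forall>t\<ge>0. w t > 0"
        "(w has_real_derivative 0) (at 0 within {0..})"
        "\<forall>t>0. (w has_real_derivative w1 t) (at t) \<and>
               (w1 has_real_derivative w2 t) (at t) \<and>
               w2 t + (real n - 1) / t * w1 t = t powr \<alpha> / (w t) powr p"
    using assms(5) unfolding w_solution_def by blast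
  have W4: "\<And>t. t>0 \<Longrightarrow> (w has_real_derivative w1 t) (at t)"
     "\<And>t. t>0 \<Longrightarrow> (w1 has_real_derivative w2 t) (at t)"
     "\<And>t. t>0 \<Longrightarrow> w2 t + (real n - 1) / t * w1 t = t powr \<alpha> / (w t) powr p"
    using W(4) by auto
  have bpos: "b > 0" using assms(4) unfolding b_def \<beta>_def .
  interpret M: mems \<alpha> p \<beta> b c0 k n w w1 w2
    apply unfold_locales
    using assms(1,2) W(1,2,3) W4 bpos
    by (simp_all only: \<beta>_def b_def c0_def k_def)
  define Z where "Z = {t. t > 0 \<and> w t = c0 * t powr \<beta>}"
  have infZ: "infinite Z" using assms(6) unfolding Z_def c0_def b_def \<beta>_def .
  have Zu: "M.u t = c0" "t > 0" if "t \<in> Z" for t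
    using that unfolding Z_def M.u_def by (auto simp: powr_minus)
  show ?thesis unfolding infinitely_many_sign_changes_def f_def[symmetric]
  proof
    fix N :: nat
    obtain F where F: "finite F" "card F = N + 2" "F \<subseteq> Z"
      using infinite_arbitrarily_large[OF infZ] by blast
    obtain xs where xs: "sorted_wrt (<) xs" "set xs = F" "length xs = N + 2"
      using sorted_list_of_set.finite_set_strict_sorted[OF F(1)] F(2) by auto
    define z where "z i = xs ! i" for i
    have zZ: "z i \<in> Z" if "i < N + 2" for i using that xs F(3) unfolding z_def by auto
    have zlt: "z i < z j" if "i < j" "j < N + 2" for i j
      using sorted_wrt_nth_less[OF xs(1) that(1)] that xs(3) unfolding z_def by auto
    have ex: "\<forall>j\<in>{..N}. \<exists>PM. z j < fst PM \<and> fst PM < z (Suc j) \<and> z j < snd PM \<and> snd PM < z (Suc j)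
            \<and> f (fst PM) > 0 \<and> f (snd PM) < 0"
    proof
      fix j assume j: "j \<in> {..N}"
      have "\<exists>P M. z j < P \<and> P < z (Suc j) \<and> z j < M \<and> M < z (Suc j) \<and> f P > 0 \<and> f M < 0"
        unfolding f_def
      proof (rule M.between)
        have "j < N + 2" "Suc j < N + 2" using j by auto
        then have "z j \<in> Z" "z (Suc j) \<in> Z" using zZ by auto
        then show "0 < z j" "M.u (z j) = c0" "M.u (z (Suc j)) = c0" using Zu by auto
        show "z j < z (Suc j)" using zlt[of j "Suc j"] j by auto
      qed
      then show "\<exists>PM. z j < fst PM \<and> fst PM < z (Suc j) \<and> z j < snd PM \<and> snd PM < z (Suc j)
            \<and> f (fst PM) > 0 \<and> f (snd PM) < 0" by auto
    qed
    then obtain g where g: "\<And>j. j \<in> {..N} \<Longrightarrow> z j < fst (g j) \<and> fst (g j) < z (Suc j) \<and> z j < snd (g j) \<and> snd (g j) < z (Suc j)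
            \<and> f (fst (g j)) > 0 \<and> f (snd (g j)) < 0"
      using bchoice[OF ex] by blast
    define s where "s j = (if even j then fst (g j) else snd (g j))" for j
    have sb: "z j < s j \<and> s j < z (Suc j)" if "j \<le> N" for j
      using g[of j] that unfolding s_def by auto
    have sf: "f (s j) * f (s (Suc j)) < 0" if "j < N" for j
    proof -
      have a: "f (fst (g j)) > 0 \<and> f (snd (g j)) < 0" "f (fst (g (Suc j))) > 0 \<and> f (snd (g (Suc j))) < 0"
        using g[of j] g[of "Suc j"] that by auto
      show ?thesis
        using a unfolding s_def by (auto simp: mult_pos_neg mult_neg_pos)
    qed
    show "\<exists>s. strict_mono_on {..N} s \<and> (\<forall>i\<le>N. s i \<in> {0<..}) \<and> (\<forall>i<N. f (s i) * f (s (Suc i)) < 0)"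
    proof (intro exI[of _ s] conjI allI impI)
      show "strict_mono_on {..N} s"
      proof (rule strict_mono_onI)
        fix i j assume "i \<in> {..N}" "j \<in> {..N}" "i < j"
        then have "s i < z (Suc i)" "z j < s j" using sb[of i] sb[of j] by auto
        moreover have "z (Suc i) \<le> z j"
        proof (cases "Suc i = j")
          case False then show ?thesis using zlt[of "Suc i" j] \<open>i < j\<close> \<open>j \<in> {..N}\<close> by auto
        qed simp
        ultimately show "s i < s j" by linarith
      qed
    next
      fix i assume "i \<le> N"
      then show "s i \<in> {0<..}" using sb[of i] zZ[of i] Zu(2)[of "z i"] by auto
    next
      fix i assume "i < N"
      then show "f (s i) * f (s (Suc i)) < 0" by (rule sf)
    qed
  qed
qed

end
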